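(* Let $j\in\mathbb{N}$. There exist surfaces in $\mathbb{P}^3(\mathbb{C})$ of degree $d=2(j+1)$ with $4(j+1)^2$ singularities of type $A_j$.
   Context: A singularity of type $A_j$ of a surface is a point where it is locally analytically equivalent to $x^{j+1}+y^2+z^2=0$. *)

theory Defs
  imports "HOL-Analysis.Analysis"
begin

text \<open>Homogeneous polynomials of degree d in the homogeneous coordinates
  x1,...,x4 of P^3(C), given by their coefficient function on exponent
  tuples (a,b,e,g) with a+b+e+g = d (coefficients elsewhere are ignored).\<close>

definition hpoly_eval :: "nat \<Rightarrow> (nat \<Rightarrow> nat \<Rightarrow> nat \<Rightarrow> nat \<Rightarrow> complex) \<Rightarrow> complex^4 \<Rightarrow> complex" where
  "hpoly_eval d c x =
     (\<Sum>(a,b,e,g)\<in>{(a,b,e,g). a + b + e + g = d}.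
        c a b e g * (x$1)^a * (x$2)^b * (x$3)^e * (x$4)^g)"

definition hpoly_nonzero :: "nat \<Rightarrow> (nat \<Rightarrow> nat \<Rightarrow> nat \<Rightarrow> nat \<Rightarrow> complex) \<Rightarrow> bool" where
  "hpoly_nonzero d c \<longleftrightarrow> (\<exists>a b e g. a + b + e + g = d \<and> c a b e g \<noteq> 0)"

definition holo_map :: "(complex^'n \<Rightarrow> complex^'m) \<Rightarrow> (complex^'n) set \<Rightarrow> bool" where
  "holo_map f S \<longleftrightarrow> open S \<and>
     (\<forall>x\<in>S. \<exists>L. (f has_derivative L) (at x) \<and> (\<forall>v. L (\<i> *s v) = \<i> *s L v))"

definition holo_fun :: "(complex^'n \<Rightarrow> complex) \<Rightarrow> (complex^'n) set \<Rightarrow> bool" where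
  "holo_fun f S \<longleftrightarrow> open S \<and>
     (\<forall>x\<in>S. \<exists>L. (f has_derivative L) (at x) \<and> (\<forall>v. L (\<i> *s v) = \<i> * L v))"

definition Aj_form :: "nat \<Rightarrow> complex^3 \<Rightarrow> complex" where
  "Aj_form j y = (y$1)^(j+1) + (y$2)^2 + (y$3)^2"

text \<open>The function germ f at p is locally analytically (contact) equivalent to the
  A_j normal form at 0: there are a local biholomorphism phi (p |-> 0) and a
  nowhere vanishing holomorphic u with f = u * (Aj_form j o phi) near p.\<close>

definition Aj_germ :: "nat \<Rightarrow> (complex^3 \<Rightarrow> complex) \<Rightarrow> complex^3 \<Rightarrow> bool" where
  "Aj_germ j f p \<longleftrightarrow>
     (\<exists>U V \<phi> \<psi> u. p \<in> U \<and> 0 \<in> V \<and> holo_map \<phi> U \<and> holo_map \<psi> V \<and> \<phi> p = 0 \<and>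
        (\<forall>x\<in>U. \<phi> x \<in> V \<and> \<psi> (\<phi> x) = x) \<and> (\<forall>y\<in>V. \<psi> y \<in> U \<and> \<phi> (\<psi> y) = y) \<and>
        holo_fun u U \<and> (\<forall>x\<in>U. u x \<noteq> 0) \<and>
        (\<forall>x\<in>U. f x = u x * Aj_form j (\<phi> x)))"

text \<open>The surface {F = 0} in P^3(C) (F homogeneous of degree d with coefficients c)
  has a singularity of type A_j at the point [v]: in an affine chart
  x |-> [v + A x] of P^3 centred at [v] (A injective, v not in range A),
  the local equation F(v + A x) is equivalent to the A_j normal form at x = 0.\<close>

definition Aj_point :: "nat \<Rightarrow> nat \<Rightarrow> (nat \<Rightarrow> nat \<Rightarrow> nat \<Rightarrow> nat \<Rightarrow> complex) \<Rightarrow> complex^4 \<Rightarrow> bool" where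
  "Aj_point j d c v \<longleftrightarrow>
     (\<exists>A :: complex^3^4.
        (\<forall>x a. A *v x + a *s v = 0 \<longrightarrow> x = 0 \<and> a = 0) \<and>
        Aj_germ j (\<lambda>x. hpoly_eval d c (v + A *v x)) 0)"

end

theory Submission
  imports Defs
begin


definition hol :: "(complex^3 \<Rightarrow> complex) \<Rightarrow> complex^3 \<Rightarrow> bool" where
  "hol f x \<longleftrightarrow> (\<exists>L. (f has_derivative L) (at x) \<and> (\<forall>v. L (\<i> *s v) = \<i> * L v))"

lemma hol_const: "hol (\<lambda>t. c) x"
  unfolding hol_def by (rule exI[of _ "\<lambda>h. 0"]) auto

lemma hol_nth: "hol (\<lambda>t. t$k) x"
  unfolding hol_def
  by (rule exI[of _ "\<lambda>h. h$k"]) (auto intro: bounded_linear_imp_has_derivative)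

lemma hol_add: "hol f x \<Longrightarrow> hol g x \<Longrightarrow> hol (\<lambda>t. f t + g t) x"
  unfolding hol_def
  apply clarify
  subgoal for L1 L2
    apply (rule exI[of _ "\<lambda>h. L1 h + L2 h"])
    apply (auto intro!: has_derivative_add simp: algebra_simps)
    done
  done

lemma hol_mult: "hol f x \<Longrightarrow> hol g x \<Longrightarrow> hol (\<lambda>t. f t * g t) x"
  unfolding hol_def
  apply clarify
  subgoal for L1 L2
    apply (rule exI[of _ "\<lambda>h. f x * L2 h + L1 h * g x"])
    apply (intro conjI allI has_derivative_mult, assumption, assumption)
    apply (simp add: algebra_simps)
    done
  done

lemma hol_comp: "hol f x \<Longrightarrow> g field_differentiable (at (f x)) \<Longrightarrow> hol (\<lambda>t. g (f t)) x"
  unfolding hol_def field_differentiable_def has_field_derivative_def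
  apply clarify
  subgoal for L g'
    apply (rule exI[of _ "\<lambda>h. g' * L h"])
    apply (auto intro: has_derivative_compose[where g=g and g'="(*) g'"] simp: algebra_simps)
    done
  done

lemma hol_minus: "hol f x \<Longrightarrow> hol (\<lambda>t. - f t) x"
  using hol_comp[of f x uminus] field_differentiable_minus[OF field_differentiable_ident] by auto

lemma hol_diff: "hol f x \<Longrightarrow> hol g x \<Longrightarrow> hol (\<lambda>t. f t - g t) x"
  using hol_add[OF _ hol_minus, of f x g] by simp

lemma hol_power: "hol f x \<Longrightarrow> hol (\<lambda>t. f t ^ n) x"
  using hol_comp[of f x "\<lambda>z. z^n"] field_differentiable_power[OF field_differentiable_ident] by auto

lemma hol_inverse: "hol f x \<Longrightarrow> f x \<noteq> 0 \<Longrightarrow> hol (\<lambda>t. inverse (f t)) x"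
  using hol_comp[of f x "inverse"] field_differentiable_inverse[OF field_differentiable_ident, of "f x"] by auto

lemma hol_divide: "hol f x \<Longrightarrow> hol g x \<Longrightarrow> g x \<noteq> 0 \<Longrightarrow> hol (\<lambda>t. f t / g t) x"
  using hol_mult[OF _ hol_inverse, of f x g] by (simp add: divide_inverse)

lemma hol_exp: "hol f x \<Longrightarrow> hol (\<lambda>t. exp (f t)) x"
  using hol_comp[of f x exp] field_differentiable_within_exp by blast

lemma hol_Ln: "hol f x \<Longrightarrow> f x \<notin> \<real>\<^sub>\<le>\<^sub>0 \<Longrightarrow> hol (\<lambda>t. Ln (f t)) x"
  using hol_comp[of f x Ln] field_differentiable_at_Ln by blast

lemmas hol_intros = hol_const hol_nth hol_add hol_mult hol_minus hol_diff hol_power hol_divide hol_exp hol_Ln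

lemma hol_cont: "hol f x \<Longrightarrow> continuous (at x) f"
  unfolding hol_def using has_derivative_continuous by blast

definition vec3 :: "complex \<Rightarrow> complex \<Rightarrow> complex \<Rightarrow> complex^3" where
  "vec3 a b c = (\<chi> i. if i = 1 then a else if i = 2 then b else c)"

lemma vec3_nth [simp]: "vec3 a b c $ 1 = a" "vec3 a b c $ 2 = b" "vec3 a b c $ 3 = c"
  by (simp_all add: vec3_def)




lemma vec_lambda_deriv:
  fixes F :: "3 \<Rightarrow> complex^3 \<Rightarrow> complex"
  assumes "\<And>i. (F i has_derivative L i) (at x)"
  shows "((\<lambda>t. \<chi> i. F i t) has_derivative (\<lambda>h. \<chi> i. L i h)) (at x)"
  apply (subst has_derivative_componentwise_within)
  apply (auto simp: Basis_vec_def inner_axis)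
  apply (rule bounded_linear.has_derivative[OF bounded_linear_inner_left assms])
  done

lemma holo_map_vec3:
  assumes "open S" "\<And>x. x \<in> S \<Longrightarrow> hol f1 x \<and> hol f2 x \<and> hol f3 x"
  shows "holo_map (\<lambda>t. vec3 (f1 t) (f2 t) (f3 t)) S"
  unfolding holo_map_def
proof (intro conjI ballI)
  show "open S" by fact
  fix x assume "x \<in> S"
  then obtain L1 L2 L3 where
    1: "(f1 has_derivative L1) (at x)" "\<forall>v. L1 (\<i> *s v) = \<i> * L1 v" and
    2: "(f2 has_derivative L2) (at x)" "\<forall>v. L2 (\<i> *s v) = \<i> * L2 v" and
    3: "(f3 has_derivative L3) (at x)" "\<forall>v. L3 (\<i> *s v) = \<i> * L3 v"
    using assms(2) unfolding hol_def by blast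
  let ?F = "\<lambda>(i::3) t. if i = 1 then f1 t else if i = 2 then f2 t else f3 t"
  let ?L = "\<lambda>(i::3) h. if i = 1 then L1 h else if i = 2 then L2 h else L3 h"
  have "(?F i has_derivative ?L i) (at x)" for i
  proof (cases "i = 1")
    case True then show ?thesis using 1 by simp
  next
    case False then show ?thesis using 2 3 by (cases "i = 2") simp_all
  qed
  then have "((\<lambda>t. \<chi> i. ?F i t) has_derivative (\<lambda>h. \<chi> i. ?L i h)) (at x)"
    by (rule vec_lambda_deriv)
  then have "((\<lambda>t. vec3 (f1 t) (f2 t) (f3 t)) has_derivative (\<lambda>h. vec3 (L1 h) (L2 h) (L3 h))) (at x)"
    unfolding vec3_def by simp
  moreover have "\<forall>v. vec3 (L1 (\<i> *s v)) (L2 (\<i> *s v)) (L3 (\<i> *s v)) = \<i> *s vec3 (L1 v) (L2 v) (L3 v)"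
    using 1 2 3 by (auto simp: vec_eq_iff forall_3)
  ultimately show "\<exists>L. ((\<lambda>t. vec3 (f1 t) (f2 t) (f3 t)) has_derivative L) (at x) \<and> (\<forall>v. L (\<i> *s v) = \<i> *s L v)"
    by blast
qed

lemma holo_fun_hol:
  assumes "open S" "\<And>x. x \<in> S \<Longrightarrow> hol f x"
  shows "holo_fun f S"
  using assms unfolding holo_fun_def hol_def by blast



definition om :: complex where "om = Complex (-1/2) (sqrt 3 / 2)"

lemma om_eq: "om^2 + om + 1 = 0"
  by (simp add: om_def complex_eq_iff power2_eq_square)

lemma om_ne: "om^2 - om \<noteq> 0"
proof
  assume "om^2 - om = 0"
  then have "Im (om^2 - om) = 0" by simp
  then show False by (simp add: om_def power2_eq_square)
qed

lemma om_ne1: "1 - om \<noteq> 0"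
  by (simp add: om_def complex_eq_iff)

definition Gq :: "complex \<Rightarrow> complex \<Rightarrow> complex \<Rightarrow> complex \<Rightarrow> complex" where
  "Gq X Y Z W = X^2 + Y^2 + Z^2 + W^2 - X*Y - X*Z - X*W - Y*Z - Y*W - Z*W"

definition aF :: "nat \<Rightarrow> complex \<Rightarrow> complex^3 \<Rightarrow> complex" where "aF m y0 t = (y0 + t$2)^m - 1"
definition bF :: "nat \<Rightarrow> complex \<Rightarrow> complex^3 \<Rightarrow> complex" where "bF m z0 t = (z0 + t$3)^m - 1"
definition uF :: "nat \<Rightarrow> complex \<Rightarrow> complex \<Rightarrow> complex^3 \<Rightarrow> complex" where
  "uF m y0 z0 t = (t$1)^m - aF m y0 t - bF m z0 t - 3"
definition alF :: "nat \<Rightarrow> complex \<Rightarrow> complex \<Rightarrow> complex^3 \<Rightarrow> complex" where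
  "alF m y0 z0 t = aF m y0 t + om * bF m z0 t"
definition beF :: "nat \<Rightarrow> complex \<Rightarrow> complex \<Rightarrow> complex^3 \<Rightarrow> complex" where
  "beF m y0 z0 t = (aF m y0 t + om^2 * bF m z0 t) / uF m y0 z0 t"
definition phiF :: "nat \<Rightarrow> complex \<Rightarrow> complex \<Rightarrow> complex^3 \<Rightarrow> complex^3" where
  "phiF m y0 z0 t = vec3 (t$1) ((alF m y0 z0 t + beF m y0 z0 t)/2) ((alF m y0 z0 t - beF m y0 z0 t)/(2*\<i>))"
definition Dn :: "complex \<Rightarrow> complex" where "Dn b = om^2 - om + b * (1 - om)"
definition alS :: "complex^3 \<Rightarrow> complex" where "alS s = s$2 + \<i> * s$3"
definition beS :: "complex^3 \<Rightarrow> complex" where "beS s = s$2 - \<i> * s$3"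
definition bbS :: "nat \<Rightarrow> complex^3 \<Rightarrow> complex" where
  "bbS m s = (beS s * ((s$1)^m - 3) - alS s * (1 + beS s)) / Dn (beS s)"
definition aaS :: "nat \<Rightarrow> complex^3 \<Rightarrow> complex" where "aaS m s = alS s - om * bbS m s"
definition rt :: "nat \<Rightarrow> complex \<Rightarrow> complex" where "rt m w = exp (Ln w / of_nat m)"
definition psiF :: "nat \<Rightarrow> complex \<Rightarrow> complex \<Rightarrow> complex^3 \<Rightarrow> complex^3" where
  "psiF m y0 z0 s = vec3 (s$1) (y0 * rt m (1 + aaS m s) - y0) (z0 * rt m (1 + bbS m s) - z0)"
definition HF :: "nat \<Rightarrow> complex \<Rightarrow> complex \<Rightarrow> complex^3 \<Rightarrow> complex" where
  "HF m y0 z0 t = Gq ((t$1)^m) ((y0 + t$2)^m) ((z0 + t$3)^m) 1"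
definition Sm :: "nat \<Rightarrow> complex set" where
  "Sm m = {w. w \<notin> \<real>\<^sub>\<le>\<^sub>0 \<and> \<bar>Im (Ln w)\<bar> < pi / m}"
definition U0 :: "nat \<Rightarrow> complex \<Rightarrow> complex \<Rightarrow> (complex^3) set" where
  "U0 m y0 z0 = {t. uF m y0 z0 t \<noteq> 0 \<and> Dn (beF m y0 z0 t) \<noteq> 0 \<and>
      (y0 + t$2) / y0 \<in> Sm m \<and> (z0 + t$3) / z0 \<in> Sm m}"
definition V0 :: "nat \<Rightarrow> (complex^3) set" where
  "V0 m = {s. Dn (beS s) \<noteq> 0 \<and> 1 + aaS m s \<notin> \<real>\<^sub>\<le>\<^sub>0 \<and> 1 + bbS m s \<notin> \<real>\<^sub>\<le>\<^sub>0 \<and>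
      (s$1)^m - aaS m s - bbS m s - 3 \<noteq> 0}"

lemma rt_pow: "w \<noteq> 0 \<Longrightarrow> m > 0 \<Longrightarrow> rt m w ^ m = w"
  unfolding rt_def by (simp add: exp_of_nat_mult[symmetric])

lemma rt_of_pow:
  assumes "m > 0" "w \<in> Sm m" shows "rt m (w^m) = w"
proof -
  have w0: "w \<noteq> 0" using assms(2) by (auto simp: Sm_def)
  have "w^m = exp (of_nat m * Ln w)" by (simp add: exp_of_nat_mult w0)
  moreover have "\<bar>Im (of_nat m * Ln w)\<bar> < pi"
    using assms by (auto simp: Sm_def abs_mult field_simps)
  then have "Ln (exp (of_nat m * Ln w)) = of_nat m * Ln w"
    by (intro Ln_exp) auto
  ultimately show ?thesis using assms w0 by (simp add: rt_def)
qed

lemma alg1: "be * (X - a - b - 3) = a + om^2 * b \<Longrightarrow>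
   b * Dn be = be * (X - 3) - (a + om * b) * (1 + be)"
  unfolding Dn_def by algebra

lemma alg2: "bb * Dn be = be * (X - 3) - al * (1 + be) \<Longrightarrow> aa = al - om * bb \<Longrightarrow>
   aa + om^2 * bb = be * (X - aa - bb - 3)"
  unfolding Dn_def by algebra

lemma alg3: "((al + be)/2)^2 + ((al - be)/(2*\<i>))^2 = al * be"
  by (simp add: power2_eq_square field_simps)

lemma alg4_aux: "w^2 + w + 1 = 0 \<Longrightarrow> u = X - a - b - 3 \<Longrightarrow> u * be = a + w^2 * b \<Longrightarrow>
   X\<^sup>2 + (1 + a)\<^sup>2 + (1 + b)\<^sup>2 + 1\<^sup>2 - X * (1 + a) - X * (1 + b) - X * 1 -
        (1 + a) * (1 + b) - (1 + a) * 1 - (1 + b) * 1 = u * (X + (a + w * b) * be)"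
  for w :: complex
proof -
  assume h: "w^2 + w + 1 = 0" "u = X - a - b - 3" "u * be = a + w^2 * b"
  have w3: "w^3 = 1"
  proof -
    have "w^3 - 1 = (w - 1) * (w^2 + w + 1)" by (simp add: algebra_simps power2_eq_square power3_eq_cube)
    then show ?thesis using h(1) by simp
  qed
  have "u * (X + (a + w * b) * be) = u * X + (a + w * b) * (u * be)" by (simp add: algebra_simps)
  also have "\<dots> = (X - a - b - 3) * X + (a + w * b) * (a + w^2 * b)" using h by simp
  also have "\<dots> = (X - a - b - 3) * X + a^2 + (w + w^2) * a * b + w^3 * b^2"
    by (simp add: algebra_simps power2_eq_square power3_eq_cube)
  also have "\<dots> = (X - a - b - 3) * X + a^2 - a * b + b^2"
  proof -
    have ws: "w + w^2 = -1" using h(1) by algebra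
    show ?thesis unfolding ws w3 by simp
  qed
  finally show ?thesis by (simp add: algebra_simps power2_eq_square)
qed

lemma alg4: "u = X - a - b - 3 \<Longrightarrow> u * be = a + om^2 * b \<Longrightarrow>
   Gq X (1 + a) (1 + b) 1 = u * (X + (a + om * b) * be)"
  unfolding Gq_def using alg4_aux[OF om_eq] by blast



lemma pow_one_nz: "y^m = (1::complex) \<Longrightarrow> m > 0 \<Longrightarrow> y \<noteq> 0"
  by (cases m) auto

lemma phiF_nth: "phiF m y0 z0 t $ 1 = t$1"
  "phiF m y0 z0 t $ 2 = (alF m y0 z0 t + beF m y0 z0 t)/2"
  "phiF m y0 z0 t $ 3 = (alF m y0 z0 t - beF m y0 z0 t)/(2*\<i>)"
  by (simp_all add: phiF_def)

lemma alS_phi: "alS (phiF m y0 z0 t) = alF m y0 z0 t"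
  by (simp add: alS_def phiF_def field_simps)

lemma beS_phi: "beS (phiF m y0 z0 t) = beF m y0 z0 t"
  by (simp add: beS_def phiF_def field_simps)

lemma pow_div_root: "y0^m = 1 \<Longrightarrow> ((w / y0)^m :: complex) = w^m"
  by (simp add: power_divide)

lemma psi_phi:
  assumes m: "m > 0" and y0: "y0^m = 1" and z0: "z0^m = 1" and t: "t \<in> U0 m y0 z0"
  shows "psiF m y0 z0 (phiF m y0 z0 t) = t"
proof -
  let ?s = "phiF m y0 z0 t"
  have u: "uF m y0 z0 t \<noteq> 0" and D: "Dn (beF m y0 z0 t) \<noteq> 0"
    and Sy: "(y0 + t$2)/y0 \<in> Sm m" and Sz: "(z0 + t$3)/z0 \<in> Sm m"
    using t by (auto simp: U0_def)
  have y00: "y0 \<noteq> 0" using pow_one_nz[OF y0 m] .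
  have z00: "z0 \<noteq> 0" using pow_one_nz[OF z0 m] .
  have ube: "beF m y0 z0 t * (t$1 ^ m - aF m y0 t - bF m z0 t - 3) = aF m y0 t + om^2 * bF m z0 t"
    using u by (simp add: beF_def uF_def)
  have "bF m z0 t * Dn (beF m y0 z0 t) = beF m y0 z0 t * (t$1^m - 3) - alF m y0 z0 t * (1 + beF m y0 z0 t)"
    using alg1[OF ube] by (simp add: alF_def)
  then have bb: "bbS m ?s = bF m z0 t"
    using D by (simp add: bbS_def alS_phi beS_phi phiF_nth field_simps)
  have aa: "aaS m ?s = aF m y0 t"
    by (simp add: aaS_def bb alS_phi alF_def)
  have "1 + aF m y0 t = ((y0 + t$2)/y0)^m" using y0 by (simp add: aF_def power_divide)
  then have r1: "y0 * rt m (1 + aF m y0 t) - y0 = t$2"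
    using rt_of_pow[OF m Sy] y00 by simp
  have "1 + bF m z0 t = ((z0 + t$3)/z0)^m" using z0 by (simp add: bF_def power_divide)
  then have r2: "z0 * rt m (1 + bF m z0 t) - z0 = t$3"
    using rt_of_pow[OF m Sz] z00 by simp
  show ?thesis
    by (simp add: psiF_def aa bb r1 r2 phiF_nth vec_eq_iff forall_3)
qed

lemma phi_psi:
  assumes m: "m > 0" and y0: "y0^m = 1" and z0: "z0^m = 1" and s: "s \<in> V0 m"
  shows "phiF m y0 z0 (psiF m y0 z0 s) = s"
proof -
  let ?p = "psiF m y0 z0 s"
  have D: "Dn (beS s) \<noteq> 0" and a1: "1 + aaS m s \<notin> \<real>\<^sub>\<le>\<^sub>0" and b1: "1 + bbS m s \<notin> \<real>\<^sub>\<le>\<^sub>0"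
    and u: "(s$1)^m - aaS m s - bbS m s - 3 \<noteq> 0"
    using s by (auto simp: V0_def)
  have a10: "1 + aaS m s \<noteq> 0" using a1 by auto
  have b10: "1 + bbS m s \<noteq> 0" using b1 by auto
  have pa: "aF m y0 ?p = aaS m s"
    using rt_pow[OF a10 m] y0 by (simp add: aF_def psiF_def power_mult_distrib)
  have pb: "bF m z0 ?p = bbS m s"
    using rt_pow[OF b10 m] z0 by (simp add: bF_def psiF_def power_mult_distrib)
  have pu: "uF m y0 z0 ?p = (s$1)^m - aaS m s - bbS m s - 3"
    unfolding uF_def pa pb by (simp add: psiF_def)
  have e1: "bbS m s * Dn (beS s) = beS s * ((s$1)^m - 3) - alS s * (1 + beS s)"
    using D by (simp add: bbS_def)
  have e2: "aaS m s + om^2 * bbS m s = beS s * ((s$1)^m - aaS m s - bbS m s - 3)"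
    using alg2[OF e1] by (simp add: aaS_def)
  have al: "alF m y0 z0 ?p = alS s" by (simp add: alF_def pa pb aaS_def)
  have be: "beF m y0 z0 ?p = beS s" using e2 u by (simp add: beF_def pa pb pu)
  show ?thesis
    unfolding phiF_def al be
    by (simp add: alS_def beS_def psiF_def vec_eq_iff forall_3 field_simps)
qed

lemma H_eq:
  assumes m: "m > 0" and u: "uF m y0 z0 t \<noteq> 0"
  shows "HF m y0 z0 t = uF m y0 z0 t * Aj_form (m - 1) (phiF m y0 z0 t)"
proof -
  have ube: "uF m y0 z0 t * beF m y0 z0 t = aF m y0 t + om^2 * bF m z0 t"
    using u by (simp add: beF_def)
  have "HF m y0 z0 t = Gq ((t$1)^m) (1 + aF m y0 t) (1 + bF m z0 t) 1"
    by (simp add: HF_def aF_def bF_def)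
  also have "\<dots> = uF m y0 z0 t * ((t$1)^m + alF m y0 z0 t * beF m y0 z0 t)"
    using alg4[OF _ ube] by (simp add: uF_def alF_def)
  also have "\<dots> = uF m y0 z0 t * Aj_form (m - 1) (phiF m y0 z0 t)"
  proof -
    have mm: "m - 1 + 1 = m" using m by simp
    show ?thesis unfolding Aj_form_def phiF_nth mm by (simp only: add.assoc alg3)
  qed
  finally show ?thesis .
qed

lemma zero_facts:
  assumes m: "m > 0" and y0: "y0^m = 1" and z0: "z0^m = 1"
  shows "0 \<in> U0 m y0 z0" "phiF m y0 z0 0 = 0" "0 \<in> V0 m"
proof -
  have y00: "y0 \<noteq> 0" using pow_one_nz[OF y0 m] .
  have z00: "z0 \<noteq> 0" using pow_one_nz[OF z0 m] .
  have S1: "1 \<in> Sm m" using m by (simp add: Sm_def)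
  have a: "aF m y0 0 = 0" "bF m z0 0 = 0" using y0 z0 by (simp_all add: aF_def bF_def)
  have u: "uF m y0 z0 0 = -3" using m by (simp add: uF_def a)
  have be: "beF m y0 z0 0 = 0" by (simp add: beF_def a)
  show "0 \<in> U0 m y0 z0" using y00 z00 S1 om_ne by (simp add: U0_def u be Dn_def)
  show "phiF m y0 z0 0 = 0" by (simp add: phiF_def alF_def be a vec_eq_iff forall_3)
  have bS: "beS 0 = 0" "alS 0 = 0" by (simp_all add: beS_def alS_def)
  have bb: "bbS m 0 = 0" by (simp add: bbS_def bS)
  have aa: "aaS m 0 = 0" by (simp add: aaS_def bS bb)
  show "0 \<in> V0 m" using om_ne m by (simp add: V0_def bS aa bb Dn_def power_0_left)
qed



lemma open_Collect_hol:
  assumes "open S" "\<And>x. x \<in> S \<Longrightarrow> hol f x" "open T"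
  shows "open {x \<in> S. f x \<in> T}"
proof -
  have "continuous_on S f"
    using assms(2) hol_cont by (simp add: continuous_at_imp_continuous_on)
  then have "open (S \<inter> f -` T)" using assms by (intro continuous_open_preimage) auto
  moreover have "S \<inter> f -` T = {x \<in> S. f x \<in> T}" by auto
  ultimately show ?thesis by simp
qed

lemma holo_map_cont: "holo_map f S \<Longrightarrow> continuous_on S f"
  unfolding holo_map_def
  by (metis continuous_at_imp_continuous_on has_derivative_continuous)

lemma holo_map_mono: "holo_map f S \<Longrightarrow> open T \<Longrightarrow> T \<subseteq> S \<Longrightarrow> holo_map f T"
  unfolding holo_map_def by blast

lemma open_Sm: "open (Sm m)"
proof -
  have "continuous_on (- \<real>\<^sub>\<le>\<^sub>0) (\<lambda>w. Im (Ln w))"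
    by (intro continuous_intros) auto
  then have "open ((- \<real>\<^sub>\<le>\<^sub>0) \<inter> (\<lambda>w. Im (Ln w)) -` {- (pi / m)<..<pi / m})"
    by (intro continuous_open_preimage) auto
  moreover have "(- \<real>\<^sub>\<le>\<^sub>0) \<inter> (\<lambda>w. Im (Ln w)) -` {- (pi / m)<..<pi / m} = Sm m"
    by (auto simp: Sm_def abs_less_iff)
  ultimately show ?thesis by simp
qed

lemma hol_uF: "hol (uF m y0 z0) t"
proof -
  have e: "uF m y0 z0 = (\<lambda>t. (t$1)^m - ((y0 + t$2)^m - 1) - ((z0 + t$3)^m - 1) - 3)"
    by (rule ext) (simp add: uF_def aF_def bF_def)
  show ?thesis unfolding e by (intro hol_intros)
qed

lemma hol_aF: "hol (aF m y0) t"
proof -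
  have e: "aF m y0 = (\<lambda>t. (y0 + t$2)^m - 1)" by (rule ext) (simp add: aF_def)
  show ?thesis unfolding e by (intro hol_intros)
qed
lemma hol_bF: "hol (bF m z0) t"
proof -
  have e: "bF m z0 = (\<lambda>t. (z0 + t$3)^m - 1)" by (rule ext) (simp add: bF_def)
  show ?thesis unfolding e by (intro hol_intros)
qed
lemma hol_beF: "uF m y0 z0 t \<noteq> 0 \<Longrightarrow> hol (beF m y0 z0) t"
proof -
  assume u: "uF m y0 z0 t \<noteq> 0"
  have e: "beF m y0 z0 = (\<lambda>t. (aF m y0 t + om^2 * bF m z0 t) / uF m y0 z0 t)"
    by (rule ext) (simp add: beF_def)
  show ?thesis unfolding e by (intro hol_divide hol_add hol_mult hol_const hol_aF hol_bF hol_uF u)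
qed
lemma hol_alF: "hol (alF m y0 z0) t" unfolding alF_def by (intro hol_intros hol_aF hol_bF)

lemma hol_DbeF: "uF m y0 z0 t \<noteq> 0 \<Longrightarrow> hol (\<lambda>t. Dn (beF m y0 z0 t)) t"
  unfolding Dn_def by (intro hol_intros hol_beF)

lemma hol_alS: "hol alS s" unfolding alS_def by (intro hol_intros)
lemma hol_beS: "hol beS s" unfolding beS_def by (intro hol_intros)
lemma hol_DbeS: "hol (\<lambda>s. Dn (beS s)) s" unfolding Dn_def by (intro hol_intros hol_beS)

lemma hol_bbS: "Dn (beS s) \<noteq> 0 \<Longrightarrow> hol (bbS m) s"
  unfolding bbS_def by (intro hol_intros hol_alS hol_beS hol_DbeS)

lemma hol_aaS: "Dn (beS s) \<noteq> 0 \<Longrightarrow> hol (aaS m) s"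
  unfolding aaS_def by (intro hol_intros hol_alS hol_bbS)

lemma hol_rt: "hol f s \<Longrightarrow> f s \<notin> \<real>\<^sub>\<le>\<^sub>0 \<Longrightarrow> m > 0 \<Longrightarrow> hol (\<lambda>s. rt m (f s)) s"
  unfolding rt_def by (intro hol_intros) auto

lemma open_U0:
  assumes "y0 \<noteq> 0" "z0 \<noteq> 0"
  shows "open (U0 m y0 z0)"
proof -
  let ?O1 = "{t \<in> UNIV. uF m y0 z0 t \<in> - {0}}"
  have o1: "open ?O1" by (rule open_Collect_hol) (auto intro: hol_uF)
  let ?O2 = "{t \<in> ?O1. Dn (beF m y0 z0 t) \<in> - {0}}"
  have o2: "open ?O2" by (rule open_Collect_hol[OF o1]) (auto intro: hol_DbeF)
  let ?O3 = "{t \<in> ?O2. (y0 + t$2) / y0 \<in> Sm m}"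
  have o3: "open ?O3" by (rule open_Collect_hol[OF o2]) (auto intro!: hol_intros open_Sm simp: assms)
  let ?O4 = "{t \<in> ?O3. (z0 + t$3) / z0 \<in> Sm m}"
  have o4: "open ?O4" by (rule open_Collect_hol[OF o3]) (auto intro!: hol_intros open_Sm simp: assms)
  moreover have "?O4 = U0 m y0 z0" by (auto simp: U0_def)
  ultimately show ?thesis by simp
qed

lemma open_V0: "open (V0 m)"
proof -
  let ?O1 = "{s \<in> UNIV. Dn (beS s) \<in> - {0}}"
  have o1: "open ?O1" by (rule open_Collect_hol) (auto intro: hol_DbeS)
  let ?O2 = "{s \<in> ?O1. 1 + aaS m s \<in> - \<real>\<^sub>\<le>\<^sub>0}"
  have o2: "open ?O2" by (rule open_Collect_hol[OF o1]) (auto intro!: hol_intros hol_aaS)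
  let ?O3 = "{s \<in> ?O2. 1 + bbS m s \<in> - \<real>\<^sub>\<le>\<^sub>0}"
  have o3: "open ?O3" by (rule open_Collect_hol[OF o2]) (auto intro!: hol_intros hol_bbS)
  let ?O4 = "{s \<in> ?O3. (s$1)^m - aaS m s - bbS m s - 3 \<in> - {0}}"
  have o4: "open ?O4" by (rule open_Collect_hol[OF o3]) (auto intro!: hol_intros hol_aaS hol_bbS)
  moreover have "?O4 = V0 m" by (auto simp: V0_def)
  ultimately show ?thesis by simp
qed

lemma holo_phi:
  assumes "y0 \<noteq> 0" "z0 \<noteq> 0"
  shows "holo_map (phiF m y0 z0) (U0 m y0 z0)"
proof -
  have e: "phiF m y0 z0 = (\<lambda>t. vec3 (t$1) ((alF m y0 z0 t + beF m y0 z0 t)/2) ((alF m y0 z0 t - beF m y0 z0 t)/(2*\<i>)))"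
    by (rule ext) (simp add: phiF_def)
  show ?thesis unfolding e
    by (rule holo_map_vec3[OF open_U0[OF assms]])
       (auto intro!: hol_intros hol_alF hol_beF simp: U0_def)
qed

lemma holo_psi:
  assumes "m > 0"
  shows "holo_map (psiF m y0 z0) (V0 m)"
proof -
  have e: "psiF m y0 z0 = (\<lambda>s. vec3 (s$1) (y0 * rt m (1 + aaS m s) - y0) (z0 * rt m (1 + bbS m s) - z0))"
    by (rule ext) (simp add: psiF_def)
  show ?thesis unfolding e
    by (rule holo_map_vec3[OF open_V0])
       (auto intro!: hol_intros hol_rt hol_aaS hol_bbS simp: V0_def assms)
qed

lemma germ_main:
  assumes m: "m > 0" and y0: "y0^m = 1" and z0: "z0^m = 1"
  shows "Aj_germ (m - 1) (HF m y0 z0) 0"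
proof -
  have y00: "y0 \<noteq> 0" using pow_one_nz[OF y0 m] .
  have z00: "z0 \<noteq> 0" using pow_one_nz[OF z0 m] .
  define U where "U = {t \<in> U0 m y0 z0. phiF m y0 z0 t \<in> V0 m}"
  define V where "V = {s \<in> V0 m. psiF m y0 z0 s \<in> U0 m y0 z0}"
  have hp: "holo_map (phiF m y0 z0) (U0 m y0 z0)" by (rule holo_phi[OF y00 z00])
  have hq: "holo_map (psiF m y0 z0) (V0 m)" by (rule holo_psi[OF m])
  have oU: "open U"
  proof -
    have "open (U0 m y0 z0 \<inter> phiF m y0 z0 -` V0 m)"
      by (rule continuous_open_preimage[OF holo_map_cont[OF hp] open_U0[OF y00 z00] open_V0])
    moreover have "U0 m y0 z0 \<inter> phiF m y0 z0 -` V0 m = U" by (auto simp: U_def)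
    ultimately show ?thesis by simp
  qed
  have oV: "open V"
  proof -
    have "open (V0 m \<inter> psiF m y0 z0 -` U0 m y0 z0)"
      by (rule continuous_open_preimage[OF holo_map_cont[OF hq] open_V0 open_U0[OF y00 z00]])
    moreover have "V0 m \<inter> psiF m y0 z0 -` U0 m y0 z0 = V" by (auto simp: V_def)
    ultimately show ?thesis by simp
  qed
  note z = zero_facts[OF m y0 z0]
  have zU: "0 \<in> U" using z by (simp add: U_def)
  have zV: "0 \<in> V" using z psi_phi[OF m y0 z0 z(1)] by (simp add: V_def)
  have 1: "\<forall>x\<in>U. phiF m y0 z0 x \<in> V \<and> psiF m y0 z0 (phiF m y0 z0 x) = x"
    using psi_phi[OF m y0 z0] by (auto simp: U_def V_def)
  have 2: "\<forall>y\<in>V. psiF m y0 z0 y \<in> U \<and> phiF m y0 z0 (psiF m y0 z0 y) = y"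
    using phi_psi[OF m y0 z0] by (auto simp: U_def V_def)
  have 3: "holo_fun (uF m y0 z0) U"
    by (rule holo_fun_hol[OF oU hol_uF])
  have 4: "\<forall>x\<in>U. uF m y0 z0 x \<noteq> 0" by (auto simp: U_def U0_def)
  have 5: "\<forall>x\<in>U. HF m y0 z0 x = uF m y0 z0 x * Aj_form (m - 1) (phiF m y0 z0 x)"
    using 4 H_eq[OF m] by blast
  have 6: "holo_map (phiF m y0 z0) U" by (rule holo_map_mono[OF hp oU]) (auto simp: U_def)
  have 7: "holo_map (psiF m y0 z0) V" by (rule holo_map_mono[OF hq oV]) (auto simp: V_def)
  show ?thesis unfolding Aj_germ_def
    using zU zV 1 2 3 4 5 6 7 z(2) by blast
qed



definition T1 :: "nat \<Rightarrow> (nat \<times> nat \<times> nat \<times> nat) set" where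
  "T1 m = {(2*m,0,0,0), (0,2*m,0,0), (0,0,2*m,0), (0,0,0,2*m)}"
definition T2 :: "nat \<Rightarrow> (nat \<times> nat \<times> nat \<times> nat) set" where
  "T2 m = {(m,m,0,0), (m,0,m,0), (m,0,0,m), (0,m,m,0), (0,m,0,m), (0,0,m,m)}"
definition c0 :: "nat \<Rightarrow> nat \<Rightarrow> nat \<Rightarrow> nat \<Rightarrow> nat \<Rightarrow> complex" where
  "c0 m a b e g = (if (a,b,e,g) \<in> T1 m then 1 else if (a,b,e,g) \<in> T2 m then -1 else 0)"

definition mon :: "complex^4 \<Rightarrow> nat \<times> nat \<times> nat \<times> nat \<Rightarrow> complex" where
  "mon x p = (case p of (a,b,e,g) \<Rightarrow> (x$1)^a * (x$2)^b * (x$3)^e * (x$4)^g)"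

lemma finite_Sd: "finite {(a,b,e,g). a + b + e + g = (d::nat)}"
proof (rule finite_subset)
  show "{(a,b,e,g). a + b + e + g = d} \<subseteq> {..d} \<times> {..d} \<times> {..d} \<times> {..d}" by auto
qed auto

lemma hpoly_support:
  assumes "T \<subseteq> {(a,b,e,g). a + b + e + g = d}"
    and "\<And>a b e g. a + b + e + g = d \<Longrightarrow> (a,b,e,g) \<notin> T \<Longrightarrow> c a b e g = 0"
  shows "hpoly_eval d c x = (\<Sum>p\<in>T. (case p of (a,b,e,g) \<Rightarrow> c a b e g) * mon x p)"
proof -
  have "hpoly_eval d c x = (\<Sum>p\<in>{(a,b,e,g). a + b + e + g = d}. (case p of (a,b,e,g) \<Rightarrow> c a b e g) * mon x p)"
    unfolding hpoly_eval_def by (rule sum.cong) (auto simp: mon_def)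
  also have "\<dots> = (\<Sum>p\<in>T. (case p of (a,b,e,g) \<Rightarrow> c a b e g) * mon x p)"
    by (rule sum.mono_neutral_right[OF finite_Sd assms(1)]) (auto simp: assms(2))
  finally show ?thesis .
qed

lemma hpoly_c0:
  assumes m: "m > 0"
  shows "hpoly_eval (2*m) (c0 m) x = Gq ((x$1)^m) ((x$2)^m) ((x$3)^m) ((x$4)^m)"
proof -
  have sub: "T1 m \<union> T2 m \<subseteq> {(a,b,e,g). a + b + e + g = 2*m}" by (auto simp: T1_def T2_def)
  have "hpoly_eval (2*m) (c0 m) x = (\<Sum>p\<in>T1 m \<union> T2 m. (case p of (a,b,e,g) \<Rightarrow> c0 m a b e g) * mon x p)"
    by (rule hpoly_support[OF sub]) (auto simp: c0_def)
  also have "\<dots> = (\<Sum>p\<in>T1 m. (case p of (a,b,e,g) \<Rightarrow> c0 m a b e g) * mon x p) +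
                  (\<Sum>p\<in>T2 m. (case p of (a,b,e,g) \<Rightarrow> c0 m a b e g) * mon x p)"
    by (rule sum.union_disjoint) (use m in \<open>auto simp: T1_def T2_def\<close>)
  also have "\<dots> = Gq ((x$1)^m) ((x$2)^m) ((x$3)^m) ((x$4)^m)"
    using m by (simp add: T1_def T2_def c0_def mon_def Gq_def power_mult power2_eq_square power_mult_distrib algebra_simps)
  finally show ?thesis .
qed

lemma hpoly_nonzero_c0: "hpoly_nonzero (2*m) (c0 m)"
  unfolding hpoly_nonzero_def by (rule exI[of _ "2*m"], rule exI[of _ 0], rule exI[of _ 0], rule exI[of _ 0])
    (simp add: c0_def T1_def)



definition vec4 :: "complex \<Rightarrow> complex \<Rightarrow> complex \<Rightarrow> complex \<Rightarrow> complex^4" where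
  "vec4 a b c d = (\<chi> i. if i = 1 then a else if i = 2 then b else if i = 3 then c else d)"

lemma vec4_nth [simp]: "vec4 a b c d $ 1 = a" "vec4 a b c d $ 2 = b" "vec4 a b c d $ 3 = c" "vec4 a b c d $ 4 = d"
  by (simp_all add: vec4_def)

lemma vec4_eq: "vec4 a b c d = vec4 a' b' c' d' \<longleftrightarrow> a = a' \<and> b = b' \<and> c = c' \<and> d = d'"
  by (auto simp: vec_eq_iff forall_4)

lemma vec4_add: "vec4 a b c d + vec4 a' b' c' d' = vec4 (a + a') (b + b') (c + c') (d + d')"
  by (auto simp: vec_eq_iff forall_4)

lemma vec4_smult: "k *s vec4 a b c d = vec4 (k * a) (k * b) (k * c) (k * d)"
  by (auto simp: vec_eq_iff forall_4)

lemma vec4_zero: "vec4 a b c d = 0 \<longleftrightarrow> a = 0 \<and> b = 0 \<and> c = 0 \<and> d = 0"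
  by (auto simp: vec_eq_iff forall_4)

lemma vec3_zero: "(x::complex^3) = 0 \<longleftrightarrow> x$1 = 0 \<and> x$2 = 0 \<and> x$3 = 0"
  by (auto simp: vec_eq_iff forall_3)

definition mat43 :: "complex^3 \<Rightarrow> complex^3 \<Rightarrow> complex^3 \<Rightarrow> complex^3 \<Rightarrow> complex^3^4" where
  "mat43 r1 r2 r3 r4 = (\<chi> i. if i = 1 then r1 else if i = 2 then r2 else if i = 3 then r3 else r4)"

definition dot3 :: "complex^3 \<Rightarrow> complex^3 \<Rightarrow> complex" where
  "dot3 r x = r$1 * x$1 + r$2 * x$2 + r$3 * x$3"

lemma mat43_mult: "mat43 r1 r2 r3 r4 *v x = vec4 (dot3 r1 x) (dot3 r2 x) (dot3 r3 x) (dot3 r4 x)"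
  by (auto simp: vec_eq_iff forall_4 matrix_vector_mult_def mat43_def sum_3 dot3_def)

lemma dot3_simps [simp]: "dot3 (vec3 1 0 0) x = x$1" "dot3 (vec3 0 1 0) x = x$2"
  "dot3 (vec3 0 0 1) x = x$3" "dot3 0 x = 0"
  by (simp_all add: dot3_def)

definition pt :: "nat \<Rightarrow> complex \<Rightarrow> complex \<Rightarrow> complex^4" where
  "pt k y z = (if k = 0 then vec4 0 y z 1 else if k = 1 then vec4 y 0 z 1
     else if k = 2 then vec4 z y 0 1 else vec4 1 y z 0)"

definition chart :: "nat \<Rightarrow> complex^3^4" where
  "chart k = (if k = 0 then mat43 (vec3 1 0 0) (vec3 0 1 0) (vec3 0 0 1) 0
     else if k = 1 then mat43 (vec3 0 1 0) (vec3 1 0 0) (vec3 0 0 1) 0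
     else if k = 2 then mat43 (vec3 0 0 1) (vec3 0 1 0) (vec3 1 0 0) 0
     else mat43 0 (vec3 0 1 0) (vec3 0 0 1) (vec3 1 0 0))"

lemma Aj_point_from:
  assumes "\<forall>x a. A *v x + a *s v = 0 \<longrightarrow> x = 0 \<and> a = 0"
    and "\<And>x. hpoly_eval d c (v + A *v x) = HF m y z x"
    and "m > 0" "y^m = 1" "z^m = 1"
  shows "Aj_point (m - 1) d c v"
proof -
  have e: "(\<lambda>x. hpoly_eval d c (v + A *v x)) = HF m y z" using assms(2) by (rule ext)
  show ?thesis unfolding Aj_point_def
    by (rule exI[of _ A], unfold e) (use assms(1) germ_main[OF assms(3-5)] in blast)
qed

lemma pt_Aj:
  assumes m: "m > 0" and k: "k < 4" and y: "y^m = 1" and z: "z^m = 1"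
  shows "Aj_point (m - 1) (2*m) (c0 m) (pt k y z)"
proof (rule Aj_point_from[OF _ _ m y z, of "chart k"])
  have k4: "k = 0 \<or> k = 1 \<or> k = 2 \<or> k = 3" using k by auto
  show "\<forall>x a. chart k *v x + a *s pt k y z = 0 \<longrightarrow> x = 0 \<and> a = 0"
    using k4 by (auto simp: chart_def pt_def mat43_mult vec4_smult vec4_add vec4_zero vec3_zero)
  fix x
  show "hpoly_eval (2 * m) (c0 m) (pt k y z + chart k *v x) = HF m y z x"
    unfolding hpoly_c0[OF m] using k4 m y z
    by (auto simp: chart_def pt_def mat43_mult vec4_add HF_def Gq_def algebra_simps)
qed



lemma k4_cases: "k < (4::nat) \<Longrightarrow> k = 0 \<or> k = 1 \<or> k = 2 \<or> k = 3" by auto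

lemma pt_inj:
  assumes "k < 4" "k' < 4" "y \<noteq> 0" "z \<noteq> 0" "y' \<noteq> 0" "z' \<noteq> 0" "pt k y z = pt k' y' z'"
  shows "k = k' \<and> y = y' \<and> z = z'"
  using assms k4_cases[OF assms(1)] k4_cases[OF assms(2)]
  by (auto simp: pt_def vec4_eq)

lemma pt_prop:
  assumes "k < 4" "k' < 4" "y \<noteq> 0" "z \<noteq> 0" "y' \<noteq> 0" "z' \<noteq> 0" "pt k' y' z' = c *s pt k y z"
  shows "pt k' y' z' = pt k y z"
  using assms k4_cases[OF assms(1)] k4_cases[OF assms(2)]
  by (auto simp: pt_def vec4_eq vec4_smult)

lemma pt_props:
  assumes m: "m > 0" and "k < 4" "y^m = 1" "z^m = 1"
  shows "pt k y z \<noteq> 0" "hpoly_eval (2*m) (c0 m) (pt k y z) = 0"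
  using assms k4_cases[OF assms(2)]
  by (auto simp: pt_def vec4_zero hpoly_c0 Gq_def power_0_left)

theorem mainTheorem8:
  fixes j :: nat
  shows "\<exists>c. hpoly_nonzero (2 * (j + 1)) c \<and>
           (\<exists>P :: (complex^4) set. finite P \<and> card P = 4 * (j + 1)^2 \<and>
              (\<forall>v\<in>P. v \<noteq> 0 \<and> hpoly_eval (2 * (j + 1)) c v = 0 \<and>
                       Aj_point j (2 * (j + 1)) c v) \<and>
              (\<forall>v\<in>P. \<forall>w\<in>P. v \<noteq> w \<longrightarrow> (\<forall>a::complex. w \<noteq> a *s v)))"
proof -
  define m where "m = j + 1"
  have m: "m > 0" by (simp add: m_def)
  define \<rho> where "\<rho> = (\<lambda>k::nat. cis (2 * pi * real k / real m))"
  have bij: "bij_betw \<rho> {..<m} {z. z ^ m = 1}"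
    unfolding \<rho>_def by (rule Complex.bij_betw_roots_unity[OF m])
  have rho1: "\<rho> a ^ m = 1" if "a < m" for a
    using bij that by (auto simp: bij_betw_def)
  have rho0: "\<rho> a \<noteq> 0" if "a < m" for a
    using pow_one_nz[OF rho1[OF that] m] .
  have rinj: "inj_on \<rho> {..<m}" using bij by (simp add: bij_betw_def)
  define D where "D = {..<(4::nat)} \<times> {..<m} \<times> {..<m}"
  define f where "f = (\<lambda>(k, a, b). pt k (\<rho> a) (\<rho> b))"
  define P where "P = f ` D"
  have injf: "inj_on f D"
  proof (rule inj_onI)
    fix p q assume p: "p \<in> D" and q: "q \<in> D" and e: "f p = f q"
    obtain k a b where pp: "p = (k, a, b)" by (cases p) auto
    obtain k' a' b' where qq: "q = (k', a', b')" by (cases q) auto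
    have dom: "k < 4" "a < m" "b < m" "k' < 4" "a' < m" "b' < m" using p q pp qq by (auto simp: D_def)
    have "k = k' \<and> \<rho> a = \<rho> a' \<and> \<rho> b = \<rho> b'"
      using pt_inj[of k k' "\<rho> a" "\<rho> b" "\<rho> a'" "\<rho> b'"] e dom rho0 by (auto simp: pp qq f_def)
    then show "p = q" using rinj dom by (auto simp: pp qq inj_on_def)
  qed
  have card: "card P = 4 * m^2"
    unfolding P_def using card_image[OF injf] by (simp add: D_def card_cartesian_product power2_eq_square)
  have memP: "\<exists>k a b. v = pt k (\<rho> a) (\<rho> b) \<and> k < 4 \<and> a < m \<and> b < m" if "v \<in> P" for v
    using that by (auto simp: P_def D_def f_def)
  show ?thesis
  proof (intro exI conjI)
    show "hpoly_nonzero (2 * (j + 1)) (c0 m)" unfolding m_def by (rule hpoly_nonzero_c0)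
    show "finite P" by (simp add: P_def D_def)
    show "card P = 4 * (j + 1)^2" using card by (simp add: m_def)
    show "\<forall>v\<in>P. v \<noteq> 0 \<and> hpoly_eval (2 * (j + 1)) (c0 m) v = 0 \<and> Aj_point j (2 * (j + 1)) (c0 m) v"
    proof
      fix v assume "v \<in> P"
      then obtain k a b where v: "v = pt k (\<rho> a) (\<rho> b)" "k < 4" "a < m" "b < m" using memP by blast
      have "Aj_point (m - 1) (2*m) (c0 m) v" using pt_Aj[OF m v(2) rho1 rho1] v by simp
      then show "v \<noteq> 0 \<and> hpoly_eval (2 * (j + 1)) (c0 m) v = 0 \<and> Aj_point j (2 * (j + 1)) (c0 m) v"
        using pt_props[OF m v(2) rho1[OF v(3)] rho1[OF v(4)]] v(1) by (simp add: m_def)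
    qed
    show "\<forall>v\<in>P. \<forall>w\<in>P. v \<noteq> w \<longrightarrow> (\<forall>a::complex. w \<noteq> a *s v)"
    proof (intro ballI impI allI)
      fix v w and c :: complex assume vP: "v \<in> P" and wP: "w \<in> P" and ne: "v \<noteq> w"
      obtain k a b where v: "v = pt k (\<rho> a) (\<rho> b)" "k < 4" "a < m" "b < m" using memP[OF vP] by blast
      obtain k' a' b' where w: "w = pt k' (\<rho> a') (\<rho> b')" "k' < 4" "a' < m" "b' < m" using memP[OF wP] by blast
      show "w \<noteq> c *s v"
      proof
        assume "w = c *s v"
        then have "w = v" using pt_prop[of k k' "\<rho> a" "\<rho> b" "\<rho> a'" "\<rho> b'" c] v w rho0 by auto
        then show False using ne by simp
      qed
    qed
  qed
qed


end
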